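(* Let $U\subseteq\mathbb{C}$ be open, let $f \in \operatorname{Hol}(U,\mathbb{C}_+)$, and let $y_0 \in U\cap\mathbb{R}$ with $f(y_0) \in \mathbb{C}_+$. Then there exists an open neighbourhood $\Omega$ of $(0, y_0)$ in $\mathbb{R}^2$ on which the equation $\lambda(x,y) = f(y - \lambda(x,y)\,x)$ has a unique $C^1$ solution $\lambda\colon \Omega \to \mathbb{C}_+$.
   Context: $\mathbb{C}_+$ is the upper half-plane and $\operatorname{Hol}(U,\mathbb{C}_+)$ the set of holomorphic functions $U\to\mathbb{C}_+$. *)

theory Defs
  imports "HOL-Analysis.Analysis"
begin

definition C1_on :: "('a::real_normed_vector) set \<Rightarrow> ('a \<Rightarrow> 'b::real_normed_vector) \<Rightarrow> bool" where
  "C1_on S g \<longleftrightarrow> (\<exists>g'. (\<forall>p\<in>S. (g has_derivative blinfun_apply (g' p)) (at p)) \<and> continuous_on S g')"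

definition upper_half_plane :: "complex set" where
  "upper_half_plane = {z. Im z > 0}"

definition is_C1_solution ::
    "(complex \<Rightarrow> complex) \<Rightarrow> complex set \<Rightarrow> (real \<times> real) set \<Rightarrow> (real \<times> real \<Rightarrow> complex) \<Rightarrow> bool" where
  "is_C1_solution f U \<Omega> lam \<longleftrightarrow>
     C1_on \<Omega> lam \<and>
     (\<forall>p\<in>\<Omega>. lam p \<in> upper_half_plane) \<and>
     (\<forall>x y. (x, y) \<in> \<Omega> \<longrightarrow>
        complex_of_real y - lam (x, y) * complex_of_real x \<in> U \<and>
        lam (x, y) = f (complex_of_real y - lam (x, y) * complex_of_real x))"

end

theory Submission imports Defs "HOL-Complex_Analysis.Complex_Analysis" begin

lemma alg_aux:
  fixes m d u l v x :: complex
  assumes "1 + x * d \<noteq> 0"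
  shows "(m + d * (u - l * v)) / (1 + x * d) - d * (u - ((m + d * (u - l * v)) / (1 + x * d) * x + l * v)) = m"
proof -
  define k where "k = (m + d * (u - l * v)) / (1 + x * d)"
  have "k * (1 + x * d) = m + d * (u - l * v)" using assms by (simp add: k_def)
  then have "k - d * (u - (k * x + l * v)) = m" by (simp add: algebra_simps)
  then show ?thesis by (simp add: k_def)
qed

theorem proposition2p4:
  fixes U :: "complex set" and f :: "complex \<Rightarrow> complex" and y0 :: real
  assumes "open U"
    and "f holomorphic_on U"
    and "f ` U \<subseteq> upper_half_plane"
    and "complex_of_real y0 \<in> U"
    and "f (complex_of_real y0) \<in> upper_half_plane"
  shows "\<exists>\<Omega> lam. open \<Omega> \<and> (0, y0) \<in> \<Omega> \<and> is_C1_solution f U \<Omega> lam \<and>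
           (\<forall>mu. is_C1_solution f U \<Omega> mu \<longrightarrow> (\<forall>p\<in>\<Omega>. mu p = lam p))"
proof -
  note U = assms(1) and hol = assms(2) and fU = assms(3) and y0U = assms(4)
  define c where "c = f (complex_of_real y0)"
  obtain e0 where e0: "e0 > 0" "cball (complex_of_real y0) e0 \<subseteq> U"
    using U y0U open_contains_cball by blast
  have contd: "continuous_on U (deriv f)"
    using holomorphic_deriv[OF hol U] holomorphic_on_imp_continuous_on by blast
  have "bounded (deriv f ` cball (complex_of_real y0) e0)"
    by (intro compact_imp_bounded compact_continuous_image continuous_on_subset[OF contd e0(2)]) auto
  then obtain M where M: "M > 0" "\<And>z. z \<in> cball (complex_of_real y0) e0 \<Longrightarrow> norm (deriv f z) \<le> M"
    unfolding bounded_pos by blast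
  have lip: "norm (f z1 - f z2) \<le> M * norm (z1 - z2)"
    if "z1 \<in> cball (complex_of_real y0) e0" "z2 \<in> cball (complex_of_real y0) e0" for z1 z2
    by (rule field_differentiable_bound[of "cball (complex_of_real y0) e0" f "deriv f"])
       (use that M e0 in \<open>auto intro!: holomorphic_derivI[OF hol U]\<close>)
  define \<epsilon> where "\<epsilon> = min e0 (1 / (2 * M))"
  have eps: "\<epsilon> > 0" "\<epsilon> \<le> e0" "M * \<epsilon> \<le> 1/2"
    using e0 M by (auto simp: \<epsilon>_def min_def field_simps)
  define r where "r = \<epsilon> / (2 * (2 + norm c))"
  have r: "r > 0" "r * (2 + norm c) \<le> \<epsilon> / 2" "M * r \<le> 1/2"
  proof -
    have nc: "2 + norm c > 0" by (simp add: add_pos_nonneg)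
    show "r > 0" using eps nc by (simp add: r_def)
    show "r * (2 + norm c) \<le> \<epsilon> / 2" using nc by (simp add: r_def field_simps)
    have "r \<le> \<epsilon> / 4" using nc eps by (simp add: r_def field_simps)
    then have "M * r \<le> M * (\<epsilon> / 4)" using M by (simp add: mult_left_mono)
    then show "M * r \<le> 1/2" using eps M by linarith
  qed
  define \<Omega> :: "(real \<times> real) set" where "\<Omega> = ball (0, y0) r"
  have inO: "\<bar>fst p\<bar> < r" "\<bar>snd p - y0\<bar> < r" if "p \<in> \<Omega>" for p
  proof -
    have "dist (fst (0::real, y0)) (fst p) < r" "dist (snd (0::real, y0)) (snd p) < r"
      using that dist_fst_le[of "(0::real, y0)" p] dist_snd_le[of "(0::real, y0)" p]
      by (auto simp: \<Omega>_def)
    then show "\<bar>fst p\<bar> < r" "\<bar>snd p - y0\<bar> < r" by (auto simp: dist_real_def)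
  qed
  define W where "W p l = complex_of_real (snd p) - l * complex_of_real (fst p)" for p :: "real \<times> real" and l
  have K1: "W p l \<in> ball (complex_of_real y0) \<epsilon>" if "p \<in> \<Omega>" "l \<in> cball c 1" for p l
  proof -
    have nl: "norm l \<le> norm c + 1" using that(2) norm_triangle_sub[of l c]
      by (auto simp: dist_norm norm_minus_commute)
    have "W p l - complex_of_real y0 = complex_of_real (snd p - y0) - l * complex_of_real (fst p)"
      by (simp add: W_def)
    then have "norm (W p l - complex_of_real y0) \<le> \<bar>snd p - y0\<bar> + norm l * \<bar>fst p\<bar>"
      by (metis norm_mult norm_of_real norm_triangle_ineq4)
    also have "\<dots> \<le> \<bar>snd p - y0\<bar> + (norm c + 1) * \<bar>fst p\<bar>"
      using nl by (simp add: mult_right_mono)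
    also have "\<dots> < r + (norm c + 1) * r"
      using inO[OF that(1)] by (intro add_less_le_mono mult_left_mono) auto
    also have "\<dots> \<le> \<epsilon>/2" using r by (simp add: algebra_simps)
    finally show ?thesis using eps by (simp add: dist_norm norm_minus_commute)
  qed
  have K2: "norm (f (W p l) - c) \<le> 1/2" if "p \<in> \<Omega>" "l \<in> cball c 1" for p l
  proof -
    have w: "W p l \<in> cball (complex_of_real y0) e0" using K1[OF that] eps by auto
    have "norm (f (W p l) - c) \<le> M * norm (W p l - complex_of_real y0)"
      unfolding c_def by (rule lip[OF w]) (use e0 in auto)
    also have "\<dots> \<le> M * \<epsilon>" using K1[OF that] M
      by (intro mult_left_mono) (auto simp: dist_norm norm_minus_commute)
    finally show ?thesis using eps by linarith
  qed
  have K3: "norm (f (W p l1) - f (W p l2)) \<le> 1/2 * norm (l1 - l2)"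
    if "p \<in> \<Omega>" "l1 \<in> cball c 1" "l2 \<in> cball c 1" for p l1 l2
  proof -
    have w1: "W p l1 \<in> cball (complex_of_real y0) e0" using K1[OF that(1,2)] eps by auto
    have w2: "W p l2 \<in> cball (complex_of_real y0) e0" using K1[OF that(1,3)] eps by auto
    have "norm (f (W p l1) - f (W p l2)) \<le> M * norm (W p l1 - W p l2)" by (rule lip[OF w1 w2])
    also have "W p l1 - W p l2 = (l2 - l1) * complex_of_real (fst p)" by (simp add: W_def algebra_simps)
    also have "M * norm \<dots> = (M * \<bar>fst p\<bar>) * norm (l1 - l2)"
      by (simp add: norm_mult norm_minus_commute)
    also have "\<dots> \<le> (1/2) * norm (l1 - l2)"
    proof (rule mult_right_mono)
      have "M * \<bar>fst p\<bar> \<le> M * r" using inO[OF that(1)] M by (intro mult_left_mono) auto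
      then show "M * \<bar>fst p\<bar> \<le> 1/2" using r by linarith
    qed simp
    finally show ?thesis .
  qed
  have WU: "W p l \<in> U" if "p \<in> \<Omega>" "l \<in> cball c 1" for p l
    using K1[OF that] eps e0 by auto
  have ex: "\<exists>!l\<in>cball c 1. f (W p l) = l" if p: "p \<in> \<Omega>" for p
  proof (rule Banach_fix[of "cball c 1" "1/2"])
    show "complete (cball c 1)" by (simp add: complete_eq_closed)
    show "(\<lambda>l. f (W p l)) ` cball c 1 \<subseteq> cball c 1"
    proof
      fix z assume "z \<in> (\<lambda>l. f (W p l)) ` cball c 1"
      then obtain l where "l \<in> cball c 1" "z = f (W p l)" by auto
      then show "z \<in> cball c 1" using K2[OF p, of l] by (auto simp: dist_norm norm_minus_commute)
    qed
    show "dist (f (W p x)) (f (W p y)) \<le> 1 / 2 * dist x y" if "x \<in> cball c 1" "y \<in> cball c 1" for x y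
      using K3[OF p that] by (simp add: dist_norm)
  qed auto
  define lam where "lam p = (THE l. l \<in> cball c 1 \<and> f (W p l) = l)" for p
  have lamP: "lam p \<in> cball c 1" "f (W p (lam p)) = lam p" if "p \<in> \<Omega>" for p
    using theI'[OF ex[OF that]] unfolding lam_def by auto
  have lamU: "l = lam p" if "p \<in> \<Omega>" "l \<in> cball c 1" "f (W p l) = l" for p l
    using ex[OF that(1)] lamP[OF that(1)] that by blast
  have c0: "0 < Im c" using assms(5) by (simp add: c_def upper_half_plane_def)
  have O0: "(0, y0) \<in> \<Omega>" using r by (simp add: \<Omega>_def)
  have oO: "open \<Omega>" by (simp add: \<Omega>_def)
  have uniq: "\<forall>p\<in>\<Omega>. mu p = lam p" if mu: "is_C1_solution f U \<Omega> mu" for mu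
  proof -
    have eqmu: "mu q = f (W q (mu q))" if "q \<in> \<Omega>" for q
      using mu that unfolding is_C1_solution_def W_def by (cases q) auto
    have "continuous_on \<Omega> mu"
      using mu unfolding is_C1_solution_def C1_on_def
      by (metis continuous_at_imp_continuous_on has_derivative_continuous)
    then have conn: "connected (mu ` \<Omega>)"
      by (intro connected_continuous_image) (auto simp: \<Omega>_def)
    have sub: "mu ` \<Omega> \<subseteq> ball c 1 \<union> - cball c 1"
    proof
      fix z assume "z \<in> mu ` \<Omega>"
      then obtain q where q: "q \<in> \<Omega>" "z = mu q" by auto
      show "z \<in> ball c 1 \<union> - cball c 1"
      proof (cases "mu q \<in> cball c 1")
        case True
        then have "norm (f (W q (mu q)) - c) \<le> 1/2" by (rule K2[OF q(1)])
        then show ?thesis using eqmu[OF q(1)] q(2) by (auto simp: dist_norm norm_minus_commute)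
      qed (use q in auto)
    qed
    have "mu (0, y0) = c" using eqmu[OF O0] by (simp add: W_def c_def)
    then have "ball c 1 \<inter> mu ` \<Omega> \<noteq> {}" using O0 by force
    then have "- cball c 1 \<inter> mu ` \<Omega> = {}"
    proof -
      have dj: "ball c 1 \<inter> - cball c 1 \<inter> mu ` \<Omega> = {}" by auto
      have oc: "open (- cball c 1)" by (simp add: open_Compl)
      from connectedD[OF conn open_ball oc dj sub] \<open>ball c 1 \<inter> mu ` \<Omega> \<noteq> {}\<close>
      show ?thesis by blast
    qed
    show ?thesis
    proof
      fix q assume q: "q \<in> \<Omega>"
      have "mu q \<in> mu ` \<Omega>" using q by blast
      then have "mu q \<in> cball c 1" using \<open>- cball c 1 \<inter> mu ` \<Omega> = {}\<close> by blast
      then show "mu q = lam q" using lamU[OF q _ eqmu[OF q, symmetric]] by blast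
    qed
  qed
  define S :: "((real \<times> real) \<times> complex) set" where "S = \<Omega> \<times> ball c 1"
  define \<Psi> :: "(real \<times> real) \<times> complex \<Rightarrow> (real \<times> real) \<times> complex"
    where "\<Psi> z = (fst z, snd z - f (W (fst z) (snd z)))" for z
  have oS: "open S" by (simp add: S_def \<Omega>_def open_Times)
  have injS: "inj_on \<Psi> S"
  proof (rule inj_onI)
    fix z1 z2 assume z: "z1 \<in> S" "z2 \<in> S" "\<Psi> z1 = \<Psi> z2"
    then have p: "fst z1 = fst z2" and
      e: "snd z1 - f (W (fst z1) (snd z1)) = snd z2 - f (W (fst z1) (snd z2))"
      by (auto simp: \<Psi>_def)
    have "snd z1 - snd z2 = f (W (fst z1) (snd z1)) - f (W (fst z1) (snd z2))"
      using e by (simp add: algebra_simps)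
    then have "norm (snd z1 - snd z2) \<le> 1/2 * norm (snd z1 - snd z2)"
      using K3[of "fst z1" "snd z1" "snd z2"] z by (auto simp: S_def)
    then have "snd z1 = snd z2" by simp
    with p show "z1 = z2" by (simp add: prod_eq_iff)
  qed
  define g where "g = inv_into S \<Psi>"
  have gP: "g (\<Psi> z) = z" if "z \<in> S" for z using injS that by (simp add: g_def)
  have lamb: "lam p \<in> ball c 1" if "p \<in> \<Omega>" for p
    using K2[OF that lamP(1)[OF that]] lamP(2)[OF that] by (simp add: dist_norm norm_minus_commute)
  have glam: "g (p, 0) = (p, lam p)" if "p \<in> \<Omega>" for p
  proof -
    have "\<Psi> (p, lam p) = (p, 0)" using lamP[OF that] by (simp add: \<Psi>_def)
    then show ?thesis using gP[of "(p, lam p)"] that lamb[OF that] by (simp add: S_def)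
  qed
  have contf: "continuous_on U f" using hol holomorphic_on_imp_continuous_on by blast
  have contW: "continuous_on S (\<lambda>z. W (fst z) (snd z))"
    unfolding W_def by (intro continuous_intros)
  have WS: "(\<lambda>z. W (fst z) (snd z)) ` S \<subseteq> U" using WU by (auto simp: S_def)
  have contPsi: "continuous_on S \<Psi>"
    unfolding \<Psi>_def by (intro continuous_intros continuous_on_compose2[OF contf contW WS]) 
  define d where "d p = deriv f (W p (lam p))" for p
  have dM: "norm (d p) \<le> M" if "p \<in> \<Omega>" for p
    using M(2)[of "W p (lam p)"] K1[OF that lamP(1)[OF that]] eps by (auto simp: d_def)
  have den: "1 + complex_of_real (fst p) * d p \<noteq> 0" if "p \<in> \<Omega>" for p
  proof
    assume "1 + complex_of_real (fst p) * d p = 0"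
    then have "norm (complex_of_real (fst p) * d p) = 1"
      by (metis add_eq_0_iff norm_minus_cancel norm_one)
    moreover have "norm (complex_of_real (fst p) * d p) \<le> r * M"
      unfolding norm_mult using inO[OF that] dM[OF that] M
      by (intro mult_mono) auto
    ultimately show False using r by (simp add: algebra_simps)
  qed
  define D where "D p h = d p * (complex_of_real (snd h) - lam p * complex_of_real (fst h))
     / (1 + complex_of_real (fst p) * d p)" for p and h :: "real \<times> real"
  have derlam: "(lam has_derivative D p) (at p)" if p: "p \<in> \<Omega>" for p
  proof -
    define l where "l = lam p"
    have zS: "(p, l) \<in> S" using lamb[OF p] p by (simp add: S_def l_def)
    define Psi' where "Psi' h = (fst h, snd h - d p * (complex_of_real (snd (fst h))
        - (snd h * complex_of_real (fst p) + l * complex_of_real (fst (fst h)))))"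
      for h :: "(real \<times> real) \<times> complex"
    define g' where "g' h = (fst h, (snd h + d p * (complex_of_real (snd (fst h))
        - l * complex_of_real (fst (fst h)))) / (1 + complex_of_real (fst p) * d p))"
      for h :: "(real \<times> real) \<times> complex"
    have dW: "((\<lambda>z. W (fst z) (snd z)) has_derivative (\<lambda>h. complex_of_real (snd (fst h))
        - (snd h * complex_of_real (fst p) + l * complex_of_real (fst (fst h))))) (at (p, l))"
      unfolding W_def
      by (auto intro!: derivative_eq_intros simp: algebra_simps)
    have df: "(f has_derivative (\<lambda>u. d p * u)) (at (W (fst (p, l)) (snd (p, l))))"
      using holomorphic_derivI[OF hol U WU[OF p], of "lam p" UNIV] lamP(1)[OF p]
      by (simp add: has_field_derivative_def d_def l_def)
    have dfW: "((\<lambda>z. f (W (fst z) (snd z))) has_derivative (\<lambda>h. d p * (complex_of_real (snd (fst h))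
        - (snd h * complex_of_real (fst p) + l * complex_of_real (fst (fst h)))))) (at (p, l))"
      by (rule has_derivative_compose[OF dW df])
    have dPsi: "(\<Psi> has_derivative Psi') (at (p, l))"
      unfolding \<Psi>_def Psi'_def
      by (intro has_derivative_Pair has_derivative_diff dfW has_derivative_fst has_derivative_snd has_derivative_ident)
    have idd: "Psi' \<circ> g' = id"
    proof
      fix h :: "(real \<times> real) \<times> complex"
      show "(Psi' \<circ> g') h = id h"
        using alg_aux[OF den[OF p]] by (simp add: Psi'_def g'_def prod_eq_iff)
    qed
    have dg: "(g has_derivative g') (at (\<Psi> (p, l)))"
      by (rule has_derivative_inverse_strong[OF oS zS contPsi gP dPsi idd])
    have Pz: "\<Psi> (p, l) = (p, 0)" using lamP[OF p] by (simp add: \<Psi>_def l_def)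
    have d1: "((\<lambda>q. (q, 0::complex)) has_derivative (\<lambda>h. (h, 0))) (at p)"
      by (intro has_derivative_Pair has_derivative_ident has_derivative_const)
    have d2: "((\<lambda>q. g (q, 0)) has_derivative (\<lambda>h. g' (h, 0))) (at p)"
      using has_derivative_compose[OF d1, of g g'] dg Pz by simp
    have d3: "((\<lambda>q. snd (g (q, 0))) has_derivative (\<lambda>h. snd (g' (h, 0)))) (at p)"
      by (rule has_derivative_snd[OF d2])
    have "(lam has_derivative (\<lambda>h. snd (g' (h, 0)))) (at p)"
      by (rule has_derivative_transform_within_open[OF d3 oO p]) (simp add: glam)
    moreover have "(\<lambda>h. snd (g' (h, 0))) = D p"
      by (auto simp: g'_def D_def l_def)
    ultimately show ?thesis by simp
  qed
  have bl: "bounded_linear (D p)" if "p \<in> \<Omega>" for p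
    using derlam[OF that] has_derivative_bounded_linear by blast
  have contlam: "continuous_on \<Omega> lam"
    by (metis continuous_at_imp_continuous_on derlam has_derivative_continuous)
  have contWl: "continuous_on \<Omega> (\<lambda>p. W p (lam p))"
    unfolding W_def by (intro continuous_intros contlam)
  have WlU: "(\<lambda>p. W p (lam p)) ` \<Omega> \<subseteq> U" using WU lamP by auto
  have contd2: "continuous_on \<Omega> d"
    unfolding d_def by (rule continuous_on_compose2[OF contd contWl WlU])
  have C1: "C1_on \<Omega> lam"
    unfolding C1_on_def
  proof (intro exI conjI ballI)
    fix p assume "p \<in> \<Omega>"
    then show "(lam has_derivative blinfun_apply (Blinfun (D p))) (at p)"
      using derlam bl by (simp add: bounded_linear_Blinfun_apply)
  next
    show "continuous_on \<Omega> (\<lambda>p. Blinfun (D p))"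
    proof (rule continuous_on_blinfun_componentwise)
      fix i :: "real \<times> real" assume "i \<in> Basis"
      have "continuous_on \<Omega> (\<lambda>p. D p i)"
        unfolding D_def using den
        by (intro continuous_intros contlam contd2) auto
      then show "continuous_on \<Omega> (\<lambda>p. blinfun_apply (Blinfun (D p)) i)"
        by (rule continuous_on_eq) (simp add: bl bounded_linear_Blinfun_apply)
    qed
  qed
  have sol: "is_C1_solution f U \<Omega> lam"
    unfolding is_C1_solution_def
  proof (intro conjI allI impI ballI C1)
    fix p assume "p \<in> \<Omega>"
    then show "lam p \<in> upper_half_plane"
      using lamP[of p] WU[of p "lam p"] fU by force
  next
    fix x y assume "(x, y) \<in> \<Omega>"
    then show "complex_of_real y - lam (x, y) * complex_of_real x \<in> U"
      "lam (x, y) = f (complex_of_real y - lam (x, y) * complex_of_real x)"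
      using lamP[of "(x,y)"] WU[of "(x,y)" "lam (x,y)"] by (auto simp: W_def)
  qed
  show ?thesis using oO O0 sol uniq by blast
qed
end
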